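(* Let $\Theta$ be a space of input histories. Every input history $h\in\Theta$ has at least one tip event, i.e. $\mathrm{tips}_\Theta(h)\neq\emptyset$; and every extended input history $h\in\mathrm{Ext}(\Theta)$ with $h\notin\Theta$ has no tip events, i.e. $\mathrm{tips}_\Theta(h)=\emptyset$.
   Context: A partial function is a function $f$ with domain $\mathrm{dom}(f)$ a subset of an index set, values in given sets; ordered by restriction ($f\le g$ iff $\mathrm{dom}(f)\subseteq\mathrm{dom}(g)$, $g|_{\mathrm{dom}(f)}=f$). Compatible = agreeing on common domain; a compatible set $\mathcal F$ has join $\bigvee\mathcal F$ (union). $\Theta$ is $\vee$-prime if for compatible $\mathcal F\subseteq\Theta$ with $\bigvee\mathcal F\in\Theta$ we have $\bigvee\mathcal F\in\mathcal F$. A space of input histories is a finite $\vee$-prime set of partial functions; $\mathrm{Ext}(\Theta)=\{\bigvee\mathcal F:\emptyset\ne\mathcal F\subseteq\Theta\text{ compatible}\}$. For $h\in\mathrm{Ext}(\Theta)$, $\mathrm{tips}_\Theta(h)=\mathrm{dom}(h)\setminus\bigcup\{\mathrm{dom}(k):k\in\mathrm{Ext}(\Theta),k<h\}$. *)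

theory Defs
  imports Main
begin

definition pf_less :: "('i \<rightharpoonup> 'v) \<Rightarrow> ('i \<rightharpoonup> 'v) \<Rightarrow> bool" where
  "pf_less f g \<longleftrightarrow> f \<subseteq>\<^sub>m g \<and> f \<noteq> g"

definition compatible :: "('i \<rightharpoonup> 'v) set \<Rightarrow> bool" where
  "compatible F \<longleftrightarrow> (\<forall>f\<in>F. \<forall>g\<in>F. \<forall>i\<in>dom f \<inter> dom g. f i = g i)"

text \<open>Join (union) of a set of partial functions; meaningful for compatible sets.\<close>
definition pf_join :: "('i \<rightharpoonup> 'v) set \<Rightarrow> ('i \<rightharpoonup> 'v)" where
  "pf_join F = (\<lambda>i. if \<exists>f\<in>F. i \<in> dom f then Some (SOME y. \<exists>f\<in>F. f i = Some y) else None)"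

definition join_prime :: "('i \<rightharpoonup> 'v) set \<Rightarrow> bool" where
  "join_prime \<Theta> \<longleftrightarrow>
     (\<forall>F. F \<subseteq> \<Theta> \<and> compatible F \<and> pf_join F \<in> \<Theta> \<longrightarrow> pf_join F \<in> F)"

definition input_history_space :: "('i \<rightharpoonup> 'v) set \<Rightarrow> bool" where
  "input_history_space \<Theta> \<longleftrightarrow> finite \<Theta> \<and> join_prime \<Theta>"

definition Ext :: "('i \<rightharpoonup> 'v) set \<Rightarrow> ('i \<rightharpoonup> 'v) set" where
  "Ext \<Theta> = {pf_join F | F. F \<noteq> {} \<and> F \<subseteq> \<Theta> \<and> compatible F}"

definition tips :: "('i \<rightharpoonup> 'v) set \<Rightarrow> ('i \<rightharpoonup> 'v) \<Rightarrow> 'i set" where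
  "tips \<Theta> h = dom h - \<Union>{dom k | k. k \<in> Ext \<Theta> \<and> pf_less k h}"

end

theory Submission
  imports Defs
begin

lemma join_val:
  assumes c: "compatible F" and f: "f \<in> F" and fi: "f i = Some y"
  shows "pf_join F i = Some y"
proof -
  have ex: "\<exists>g\<in>F. g i = Some y" using f fi by blast
  have "\<exists>g\<in>F. i \<in> dom g" using f fi by blast
  then have "pf_join F i = Some (SOME y. \<exists>g\<in>F. g i = Some y)" unfolding pf_join_def by simp
  moreover have "(SOME y. \<exists>g\<in>F. g i = Some y) = y"
  proof (rule someI2_ex)
    show "\<exists>a. \<exists>g\<in>F. g i = Some a" using ex by blast
  next
    fix z assume "\<exists>g\<in>F. g i = Some z"
    then obtain g where "g \<in> F" "g i = Some z" by blast
    then show "z = y" using c f fi unfolding compatible_def by (metis IntI domI option.inject)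
  qed
  ultimately show ?thesis by simp
qed

lemma join_le: "compatible F \<Longrightarrow> f \<in> F \<Longrightarrow> f \<subseteq>\<^sub>m pf_join F"
  unfolding map_le_def using join_val by (metis domD)

lemma join_dom: "dom (pf_join F) = \<Union>(dom ` F)"
  unfolding pf_join_def dom_def by auto

lemma compat_single: "compatible {f}"
  unfolding compatible_def by simp

lemma join_single: "pf_join {f} = f"
proof (rule ext)
  fix i show "pf_join {f} i = f i"
  proof (cases "f i")
    case None then show ?thesis unfolding pf_join_def by (simp add: domIff)
  next
    case (Some y) then show ?thesis using join_val[of "{f}" f i y, OF compat_single] by simp
  qed
qed

lemma join_least:
  assumes c: "compatible F" and le: "\<And>f. f \<in> F \<Longrightarrow> f \<subseteq>\<^sub>m h"
  shows "pf_join F \<subseteq>\<^sub>m h"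
  unfolding map_le_def
proof (intro ballI)
  fix i assume i: "i \<in> dom (pf_join F)"
  then have "i \<in> \<Union>(dom ` F)" by (simp only: join_dom)
  then obtain f where f: "f \<in> F" "i \<in> dom f" by blast
  then obtain y where y: "f i = Some y" by blast
  then have "pf_join F i = Some y" using join_val c f by metis
  moreover have "h i = Some y" using le[OF f(1)] y unfolding map_le_def by force
  ultimately show "pf_join F i = h i" by simp
qed

lemma Ext_le:
  assumes "k \<in> Ext \<Theta>" "i \<in> dom k"
  shows "\<exists>g\<in>\<Theta>. g \<subseteq>\<^sub>m k \<and> i \<in> dom g"
proof -
  obtain F where F: "k = pf_join F" "F \<subseteq> \<Theta>" "compatible F" using assms(1) unfolding Ext_def by blast
  then have "i \<in> \<Union>(dom ` F)" using assms(2) unfolding F(1) join_dom by simp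
  then obtain g where "g \<in> F" "i \<in> dom g" by blast
  then show ?thesis using F join_le by blast
qed

theorem proposition15:
  fixes \<Theta> :: "('i \<rightharpoonup> 'v) set"
  assumes "input_history_space \<Theta>"
  shows "(\<forall>h\<in>\<Theta>. tips \<Theta> h \<noteq> {}) \<and> (\<forall>h\<in>Ext \<Theta>. h \<notin> \<Theta> \<longrightarrow> tips \<Theta> h = {})"
proof
  have jp: "join_prime \<Theta>" using assms unfolding input_history_space_def by simp
  show "\<forall>h\<in>\<Theta>. tips \<Theta> h \<noteq> {}"
  proof (intro ballI notI)
    fix h assume h: "h \<in> \<Theta>" and t: "tips \<Theta> h = {}"
    define F where "F = {g \<in> \<Theta>. g \<subseteq>\<^sub>m h \<and> g \<noteq> h}"
    have c: "compatible F" unfolding compatible_def F_def map_le_def by auto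
    have le: "pf_join F \<subseteq>\<^sub>m h" using join_least[OF c] unfolding F_def by blast
    have "dom h \<subseteq> dom (pf_join F)"
    proof
      fix i assume i: "i \<in> dom h"
      have "i \<in> \<Union>{dom k | k. k \<in> Ext \<Theta> \<and> pf_less k h}"
      proof (rule ccontr)
        assume "i \<notin> \<Union>{dom k | k. k \<in> Ext \<Theta> \<and> pf_less k h}"
        then have "i \<in> tips \<Theta> h" using i unfolding tips_def by (rule DiffI[rotated])
        then show False using t by simp
      qed
      then obtain k where k: "k \<in> Ext \<Theta>" "pf_less k h" "i \<in> dom k"
        by auto
      obtain g where g: "g \<in> \<Theta>" "g \<subseteq>\<^sub>m k" "i \<in> dom g" using Ext_le[OF k(1) k(3)] by blast
      have kh: "k \<subseteq>\<^sub>m h" "k \<noteq> h" using k(2) unfolding pf_less_def by auto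
      have "g \<subseteq>\<^sub>m h" using map_le_trans[OF g(2) kh(1)] .
      moreover have "g \<noteq> h"
      proof
        assume "g = h"
        then have "k = h" using map_le_antisym[OF kh(1)] g(2) by simp
        then show False using kh(2) by simp
      qed
      ultimately have "g \<in> F" using g unfolding F_def by blast
      then show "i \<in> dom (pf_join F)" unfolding join_dom using g(3) by auto
    qed
    then have "h \<subseteq>\<^sub>m pf_join F" using le unfolding map_le_def by (metis domIff subsetD)
    then have eq: "pf_join F = h" using le map_le_antisym by blast
    have "F \<subseteq> \<Theta>" unfolding F_def by blast
    then have "pf_join F \<in> F" using jp c eq h unfolding join_prime_def by blast
    then show False using eq unfolding F_def by blast
  qed
  show "\<forall>h\<in>Ext \<Theta>. h \<notin> \<Theta> \<longrightarrow> tips \<Theta> h = {}"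
  proof (intro ballI impI)
    fix h assume h: "h \<in> Ext \<Theta>" "h \<notin> \<Theta>"
    obtain F where F: "h = pf_join F" "F \<subseteq> \<Theta>" "compatible F" using h(1) unfolding Ext_def by blast
    have "dom h \<subseteq> \<Union>{dom k | k. k \<in> Ext \<Theta> \<and> pf_less k h}"
    proof
      fix i assume "i \<in> dom h"
      then have "i \<in> \<Union>(dom ` F)" using F(1) join_dom[of F] by simp
      then obtain f where f: "f \<in> F" "i \<in> dom f" by blast
      have "f \<in> Ext \<Theta>" unfolding Ext_def using f F
        by (intro CollectI exI[of _ "{f}"]) (auto simp add: join_single compat_single)
      moreover have "pf_less f h" unfolding pf_less_def using F f h join_le by blast
      ultimately show "i \<in> \<Union>{dom k | k. k \<in> Ext \<Theta> \<and> pf_less k h}" using f by blast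
    qed
    then show "tips \<Theta> h = {}" unfolding tips_def by (rule Diff_eq_empty_iff[THEN iffD2])
  qed
qed

end
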